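(* Let $a$ be a positive integer and let $P_a = \{C_{i,a+1} : 1 \le i \le 2a+1\} \cup \{C_{a+1,j} : 1 \le j \le 2a+1\}$ be the plus polyomino, of size $n = 4a+1$. Then on the $n \times n$ board, $\mathrm{cp}(P_a) = 1$, where $\mathrm{cp}(P_a)$ denotes the common value $\mathrm{cp}_{\mathrm{fixed}}(P_a) = \mathrm{cp}_{\mathrm{free}}(P_a)$.
   Context: For integers $i,j$, $C_{i,j}$ denotes the unit square cell in column $i$ and row $j$ of the integer grid (columns numbered left to right, rows numbered top to bottom). A polyomino is a finite set of cells; its size is its number of cells. For a polyomino $\mathcal{P}$ of size $n$ the board is $\mathbb{B} = \{C_{i,j} : 1 \le i,j \le n\}$. The shift of $\mathcal{P}$ by integers $(c,d)$ is $\mathcal{P}+(c,d) = \{C_{x+c,y+d} : C_{x,y} \in \mathcal{P}\}$. A fixed copy of $\mathcal{P}$ is any shift of $\mathcal{P}$; a free copy is any shift of a rotation of $\mathcal{P}$ by a multiple of $90^\circ$ (for $P_a$, every rotation equals $P_a$, so fixed and free copies coincide). A set of polyominoes is a valid arrangement if each is contained in $\mathbb{B}$ and they are pairwise disjoint. A fixed (resp. free) packing of $\mathcal{P}$ is a set of fixed (resp. free) copies of $\mathcal{P}$ forming a valid arrangement such that adding any further fixed (resp. free) copy yields an invalid arrangement. The clumsy fixed (resp. free) packing number $\mathrm{cp}_{\mathrm{fixed}}(\mathcal{P})$ (resp. $\mathrm{cp}_{\mathrm{free}}(\mathcal{P})$) is the minimum number of polyominoes in such a packing on the $n\times n$ board.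 *)

theory Defs
  imports Main
begin

(* A cell C_{i,j} is the pair (i,j) :: int * int  (column i, row j). *)
type_synonym cell = "int \<times> int"
type_synonym polyomino = "cell set"

definition shift :: "polyomino \<Rightarrow> int \<Rightarrow> int \<Rightarrow> polyomino" where
  "shift P c d = (\<lambda>(x,y). (x + c, y + d)) ` P"

definition rot90 :: "polyomino \<Rightarrow> polyomino" where
  "rot90 P = (\<lambda>(x,y). (- y, x)) ` P"

definition board :: "nat \<Rightarrow> polyomino" where
  "board n = {1..int n} \<times> {1..int n}"

definition fixed_copies :: "polyomino \<Rightarrow> polyomino set" where
  "fixed_copies P = {shift P c d | c d. True}"

definition free_copies :: "polyomino \<Rightarrow> polyomino set" where
  "free_copies P = {shift ((rot90 ^^ k) P) c d | k c d. k < 4}"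

definition valid_arrangement :: "nat \<Rightarrow> polyomino set \<Rightarrow> bool" where
  "valid_arrangement n S \<longleftrightarrow>
     (\<forall>Q\<in>S. Q \<subseteq> board n) \<and> (\<forall>Q\<in>S. \<forall>R\<in>S. Q \<noteq> R \<longrightarrow> Q \<inter> R = {})"

definition is_packing :: "polyomino \<Rightarrow> polyomino set \<Rightarrow> polyomino set \<Rightarrow> bool" where
  "is_packing P copies S \<longleftrightarrow>
     S \<subseteq> copies \<and> valid_arrangement (card P) S \<and>
     (\<forall>Q\<in>copies. Q \<notin> S \<longrightarrow> \<not> valid_arrangement (card P) (insert Q S))"

definition cp_fixed :: "polyomino \<Rightarrow> nat" where
  "cp_fixed P = (LEAST k. \<exists>S. is_packing P (fixed_copies P) S \<and> card S = k)"

definition cp_free :: "polyomino \<Rightarrow> nat" where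
  "cp_free P = (LEAST k. \<exists>S. is_packing P (free_copies P) S \<and> card S = k)"

definition plus_poly :: "int \<Rightarrow> polyomino" where
  "plus_poly a = {(i, a + 1) | i. 1 \<le> i \<and> i \<le> 2*a + 1} \<union> {(a + 1, j) | j. 1 \<le> j \<and> j \<le> 2*a + 1}"

end

theory Submission
  imports Defs
begin

definition pl :: "int \<Rightarrow> int \<Rightarrow> int \<Rightarrow> polyomino" where
  "pl a cx cy = {(x,y). (y = cy \<and> \<bar>x - cx\<bar> \<le> a) \<or> (x = cx \<and> \<bar>y - cy\<bar> \<le> a)}"
lemma rot90_eq: "rot90 P = {(u,v). (v,-u) \<in> P}"
proof (rule set_eqI, rule iffI)
  fix z assume "z \<in> rot90 P" then show "z \<in> {(u,v). (v,-u) \<in> P}" unfolding rot90_def by auto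
next
  fix z assume "z \<in> {(u,v). (v,-u) \<in> P}"
  then obtain u v where z: "z = (u,v)" "(v,-u) \<in> P" by auto
  have "z = (\<lambda>(x,y). (-y,x)) (v,-u)" using z by simp
  then show "z \<in> rot90 P" unfolding rot90_def using z(2) by (rule image_eqI)
qed
lemma shift_eq: "shift P c d = {(u,v). (u-c, v-d) \<in> P}"
proof (rule set_eqI, rule iffI)
  fix z assume "z \<in> shift P c d" then show "z \<in> {(u,v). (u-c, v-d) \<in> P}" unfolding shift_def by auto
next
  fix z assume "z \<in> {(u,v). (u-c, v-d) \<in> P}"
  then obtain u v where z: "z = (u,v)" "(u-c, v-d) \<in> P" by auto
  have "z = (\<lambda>(x,y). (x+c,y+d)) (u-c, v-d)" using z by simp
  then show "z \<in> shift P c d" unfolding shift_def using z(2) by (rule image_eqI)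
qed
lemma plus_pl: "a \<ge> 0 \<Longrightarrow> plus_poly a = pl a (a+1) (a+1)"
  unfolding plus_poly_def pl_def by (auto simp: abs_le_iff)
lemma shift_pl: "shift (pl a cx cy) c d = pl a (cx+c) (cy+d)"
  unfolding shift_eq pl_def by (auto simp: algebra_simps)
lemma rot_pl: "rot90 (pl a cx cy) = pl a (-cy) cx"
  unfolding rot90_eq pl_def by (auto simp: algebra_simps abs_minus_commute)

lemma rotk_pl: "\<exists>cx' cy'. (rot90 ^^ k) (pl a cx cy) = pl a cx' cy'"
proof (induction k)
  case (Suc k)
  then obtain p q where h: "(rot90 ^^ k) (pl a cx cy) = pl a p q" by blast
  have "(rot90 ^^ Suc k) (pl a cx cy) = pl a (-q) p" using h by (simp add: rot_pl)
  then show ?case by blast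
qed auto

lemma card_pl: assumes "a \<ge> 0" shows "card (pl a cx cy) = nat (4*a+1)"
proof -
  have e: "pl a cx cy = (\<lambda>i. (i,cy)) ` {cx-a..cx+a} \<union> (\<lambda>j. (cx,j)) ` ({cy-a..cy+a} - {cy})"
    unfolding pl_def by (auto simp: image_iff abs_le_iff)
  have "card ((\<lambda>i. (i,cy)) ` {cx-a..cx+a}) = nat (2*a+1)"
    by (subst card_image) (auto simp: inj_on_def)
  moreover have "card ((\<lambda>j. (cx,j)) ` ({cy-a..cy+a} - {cy})) = nat (2*a)"
    using assms by (subst card_image) (auto simp: inj_on_def)
  moreover have "(\<lambda>i. (i,cy)) ` {cx-a..cx+a} \<inter> (\<lambda>j. (cx,j)) ` ({cy-a..cy+a} - {cy}) = {}"
    by auto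
  ultimately show ?thesis unfolding e using assms
    by (subst card_Un_disjoint) auto
qed

lemma main:
  assumes a: "a \<ge> 1"
    and allpl: "\<forall>Q\<in>C. \<exists>cx cy. Q = pl a cx cy"
    and cen: "pl a (2*a+1) (2*a+1) \<in> C"
    and cP: "card P = nat (4*a+1)"
  shows "(LEAST k. \<exists>S. is_packing P C S \<and> card S = k) = 1"
proof -
  let ?Z = "pl a (2*a+1) (2*a+1)"
  have inb: "?Z \<subseteq> board (card P)" using a unfolding cP board_def pl_def by auto
  have pack: "is_packing P C {?Z}"
    unfolding is_packing_def
  proof (intro conjI ballI impI)
    show "{?Z} \<subseteq> C" using cen by auto
    show "valid_arrangement (card P) {?Z}" using inb unfolding valid_arrangement_def by auto
  next
    fix Q assume Q: "Q \<in> C" "Q \<notin> {?Z}"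
    show "\<not> valid_arrangement (card P) (insert Q {?Z})"
    proof
      assume v: "valid_arrangement (card P) (insert Q {?Z})"
      obtain cx cy where q: "Q = pl a cx cy" using allpl Q by blast
      have sub: "Q \<subseteq> board (card P)" using v unfolding valid_arrangement_def by auto
      have "(cx - a, cy) \<in> Q" "(cx + a, cy) \<in> Q" "(cx, cy-a) \<in> Q" "(cx, cy+a) \<in> Q"
        using a unfolding q pl_def by auto
      hence "cx - a \<ge> 1" "cx + a \<le> 4*a+1" "cy - a \<ge> 1" "cy + a \<le> 4*a+1"
        using sub a unfolding cP board_def by auto
      hence "(2*a+1, cy) \<in> Q \<inter> ?Z" unfolding q pl_def by auto
      moreover have "Q \<noteq> ?Z" using Q by auto
      ultimately show False using v unfolding valid_arrangement_def by blast
    qed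
  qed
  have not0: "\<not> is_packing P C {}"
    using inb cen unfolding is_packing_def valid_arrangement_def by auto
  show ?thesis
  proof (rule Least_equality)
    show "\<exists>S. is_packing P C S \<and> card S = 1" using pack by (intro exI[of _ "{?Z}"]) auto
  next
    fix y assume "\<exists>S. is_packing P C S \<and> card S = y"
    then obtain S where S: "is_packing P C S" "card S = y" by blast
    show "1 \<le> y"
    proof (rule ccontr)
      assume "\<not> 1 \<le> y"
      hence "card S = 0" using S by simp
      moreover have "finite S"
      proof -
        have "S \<subseteq> Pow (board (card P))" using S(1) unfolding is_packing_def valid_arrangement_def by auto
        moreover have "finite (board (card P))" unfolding board_def by simp
        ultimately show ?thesis by (meson finite_Pow_iff finite_subset)
      qed
      ultimately have "S = {}" by simp
      with S(1) not0 show False by simp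
    qed
  qed
qed

theorem theorem10:
  fixes a :: int
  assumes "a \<ge> 1"
  shows "cp_fixed (plus_poly a) = 1 \<and> cp_free (plus_poly a) = 1"
proof -
  have pp: "plus_poly a = pl a (a+1) (a+1)" using assms by (simp add: plus_pl)
  have cP: "card (plus_poly a) = nat (4*a+1)" using assms pp card_pl by simp
  have h0: "shift (plus_poly a) a a = pl a (2*a+1) (2*a+1)"
    unfolding pp shift_pl by (simp add: algebra_simps)
  have 1: "cp_fixed (plus_poly a) = 1"
    unfolding cp_fixed_def
  proof (rule main[OF assms _ _ cP])
    show "\<forall>Q\<in>fixed_copies (plus_poly a). \<exists>cx cy. Q = pl a cx cy"
    proof
      fix Q assume "Q \<in> fixed_copies (plus_poly a)"
      then obtain c d where "Q = shift (plus_poly a) c d" unfolding fixed_copies_def by blast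
      then have "Q = pl a (a+1+c) (a+1+d)" unfolding pp shift_pl by simp
      then show "\<exists>cx cy. Q = pl a cx cy" by blast
    qed
    show "pl a (2*a+1) (2*a+1) \<in> fixed_copies (plus_poly a)"
      unfolding fixed_copies_def mem_Collect_eq
      by (rule exI[of _ a], rule exI[of _ a]) (simp add: h0)
  qed
  have 2: "cp_free (plus_poly a) = 1"
    unfolding cp_free_def
  proof (rule main[OF assms _ _ cP])
    show "\<forall>Q\<in>free_copies (plus_poly a). \<exists>cx cy. Q = pl a cx cy"
    proof
      fix Q assume "Q \<in> free_copies (plus_poly a)"
      then obtain k c d where q: "Q = shift ((rot90 ^^ k) (plus_poly a)) c d" unfolding free_copies_def by blast
      obtain p r where "(rot90 ^^ k) (pl a (a+1) (a+1)) = pl a p r" using rotk_pl by blast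
      then have "Q = pl a (p+c) (r+d)" unfolding q pp by (simp add: shift_pl)
      then show "\<exists>cx cy. Q = pl a cx cy" by blast
    qed
    show "pl a (2*a+1) (2*a+1) \<in> free_copies (plus_poly a)"
      unfolding free_copies_def mem_Collect_eq
      by (rule exI[of _ 0], rule exI[of _ a], rule exI[of _ a]) (simp add: h0)
  qed
  show ?thesis using 1 2 by simp
qed

end
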